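(* Fix $M\ge1$, $L=\lfloor M/2\rfloor$ and complex constants $\alpha_1,\dots,\alpha_{L+1},\beta,\delta,\epsilon,\lambda_1,\dots,\lambda_M,\eta,\omega_1,\dots,\omega_L,\zeta$. Let $\mathcal A$ be a unital associative algebra over $\mathbb C$ with elements $b,b^\dagger$ and a unital algebra homomorphism $f\mapsto f(N)$ from the algebra of functions $\mathbb Z\to\mathbb C$ into $\mathcal A$ such that $f(N)b^\dagger=b^\dagger f(N+1)$ and $f(N)b=bf(N-1)$ for all $f$, and $b^\dagger b=\Phi(N)$, $bb^\dagger=\Phi(N+1)$ for some $\Phi:\mathbb Z\to\mathbb C$. For functions $A,h,\rho:\mathbb Z\to\mathbb C$ put $\Delta A(n)=A(n+1)-A(n)$ and $$\mathbf A=A(N),\quad \mathbf B=h(N)+b^\dagger\rho(N)+\rho(N)b,\quad \mathbf C=b^\dagger\Delta A(N)\rho(N)-\rho(N)\Delta A(N)b .$$ Then $[\mathbf A,\mathbf B]=\mathbf C$. If moreover for all $n\in\mathbb Z$: (q1) $(\Delta A(n))^2=\delta+\beta(A(n)+A(n+1))$; (q2) $\sum_{i=1}^{L+1}\alpha_iA(n)^i+\delta h(n)+\epsilon+2\beta A(n)h(n)=0$; (q3) $\Delta A(n)-\Delta A(n+1)=-\beta$; (q4) $\Delta A(n)(h(n+1)-h(n))=-\beta(h(n+1)+h(n))+\sum_{i=1}^{L}\omega_i(A(n+1)^i+A(n)^i)+\eta$; (q5) $2\Phi(n+1)\rho(n)^2\Delta A(n)-2\Phi(n)\rho(n-1)^2\Delta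 A(n-1)=\zeta+\sum_{i=1}^{M}\lambda_iA(n)^i-\beta h(n)^2-\beta(\rho(n-1)^2\Phi(n)+\rho(n)^2\Phi(n+1))+\eta h(n)+2\sum_{j=1}^{L}\omega_jA(n)^jh(n)$; then $[\mathbf A,\mathbf C]=\sum_{i=1}^{L+1}\alpha_i\mathbf A^i+\delta\mathbf B+\epsilon+\beta\{\mathbf A,\mathbf B\}$ and $[\mathbf B,\mathbf C]=\sum_{i=1}^{M}\lambda_i\mathbf A^i-\beta\mathbf B^2+\eta\mathbf B+\sum_{i=1}^{L}\omega_i\{\mathbf A^i,\mathbf B\}+\zeta$. Furthermore, (q1) and (q3) are satisfied by $A(n)=\sqrt\delta\,n+c_1$ when $\beta=0$ and by $A(n)=-\frac{\beta}{8}-\frac{\delta}{2\beta}+\frac{\beta}{2}(n+c_1)^2$ when $\beta\neq0$ (any constant $c_1$, any square root of $\delta$); and if $\delta+2\beta A(n)\ne0$ for all $n$, (q2) is satisfied by $h(n)=-\big(\sum_{i=1}^{L+1}\alpha_iA(n)^i+\epsilon\big)/(\delta+2\beta A(n))$, which for these $A$ equals $-4\big(\sum_{i=1}^{L+1}\alpha_iA(n)^i+\epsilon\big)/(4A'(n)^2-\beta^2)$, where $A'$ is the derivative of $A$ regarded as a polynomial in $n$.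
   Context: $[X,Y]=XY-YX$, $\{X,Y\}=XY+YX$; $f(N+1)$ denotes the image of $n\mapsto f(n+1)$. The function $h$ is the paper's function $b(N)$, renamed to avoid confusion with the element $b$. $\lfloor y\rfloor$ is the integer part. *)

theory Defs
  imports "HOL-Analysis.Analysis"
begin

class complex_algebra_1 = ring_1 +
  fixes cscale :: "complex \<Rightarrow> 'a \<Rightarrow> 'a"
  assumes cscale_add_right: "cscale a (x + y) = cscale a x + cscale a y"
    and cscale_add_left: "cscale (a + c) x = cscale a x + cscale c x"
    and cscale_cscale: "cscale a (cscale c x) = cscale (a * c) x"
    and cscale_one: "cscale 1 x = x"
    and mult_cscale_left: "cscale a x * y = cscale a (x * y)"
    and mult_cscale_right: "x * cscale a y = cscale a (x * y)"

text \<open>Unital algebra homomorphism from the algebra of functions Z -> C (pointwise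
operations) into the algebra; F f plays the role of f(N).\<close>
definition fun_alg_hom :: "((int \<Rightarrow> complex) \<Rightarrow> 'a::complex_algebra_1) \<Rightarrow> bool" where
  "fun_alg_hom F \<longleftrightarrow>
     (\<forall>f g. F (\<lambda>n. f n + g n) = F f + F g) \<and>
     (\<forall>c f. F (\<lambda>n. c * f n) = cscale c (F f)) \<and>
     (\<forall>f g. F (\<lambda>n. f n * g n) = F f * F g) \<and>
     F (\<lambda>n. 1) = 1"

definition commutator :: "'a::ring \<Rightarrow> 'a \<Rightarrow> 'a" where
  "commutator X Y = X * Y - Y * X"

definition anticommutator :: "'a::ring \<Rightarrow> 'a \<Rightarrow> 'a" where
  "anticommutator X Y = X * Y + Y * X"

definition fdiff :: "(int \<Rightarrow> complex) \<Rightarrow> int \<Rightarrow> complex" where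
  "fdiff A n = A (n + 1) - A n"

end

theory Submission
  imports Defs
begin


lemma cscale_zero_left: "cscale 0 (x::'a::complex_algebra_1) = 0"
proof -
  have "cscale (0+0) x = cscale 0 x + cscale 0 x" by (rule cscale_add_left)
  thus ?thesis by simp
qed

lemma cscale_neg1: "cscale (-1) (x::'a::complex_algebra_1) = - x"
proof -
  have "cscale (1 + -1) x = cscale 1 x + cscale (-1) x" by (rule cscale_add_left)
  thus ?thesis by (simp add: cscale_zero_left cscale_one eq_neg_iff_add_eq_0 add.commute)
qed

lemma cscale_zero_right: "cscale c (0::'a::complex_algebra_1) = 0"
proof -
  have "cscale c (0+0::'a) = cscale c 0 + cscale c 0" by (rule cscale_add_right)
  thus ?thesis by simp
qed

lemma cscale_minus_right: "cscale c (x - y::'a::complex_algebra_1) = cscale c x - cscale c y"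
proof -
  have "cscale c (x - y + y) = cscale c (x-y) + cscale c y" by (rule cscale_add_right)
  thus ?thesis by (simp add: eq_diff_eq)
qed

locale alg_setup =
  fixes F :: "(int \<Rightarrow> complex) \<Rightarrow> 'a::complex_algebra_1" and b bd :: 'a and \<Phi> :: "int \<Rightarrow> complex"
  assumes hom: "fun_alg_hom F"
    and comm_bd: "\<And>f. F f * bd = bd * F (\<lambda>n. f (n + 1))"
    and comm_b: "\<And>f. F f * b = b * F (\<lambda>n. f (n - 1))"
    and bdb: "bd * b = F \<Phi>"
    and bbd: "b * bd = F (\<lambda>n. \<Phi> (n + 1))"
begin

lemma F_add: "F (\<lambda>n. f n + g n) = F f + F g" using hom by (simp add: fun_alg_hom_def)
lemma F_cs: "F (\<lambda>n. c * f n) = cscale c (F f)" using hom by (simp add: fun_alg_hom_def)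
lemma F_mul: "F (\<lambda>n. f n * g n) = F f * F g" using hom by (simp add: fun_alg_hom_def)
lemma F_1: "F (\<lambda>n. 1) = 1" using hom by (simp add: fun_alg_hom_def)

lemma F_0: "F (\<lambda>n. 0) = 0"
proof -
  have "F (\<lambda>n. 0) = F (\<lambda>n. 0) + F (\<lambda>n. 0)" using F_add[of "\<lambda>n. 0" "\<lambda>n. 0"] by simp
  thus ?thesis by simp
qed

lemma F_uminus: "F (\<lambda>n. - f n) = - F f"
  using F_cs[of "-1" f] by (simp add: cscale_neg1)

lemma F_diff: "F (\<lambda>n. f n - g n) = F f - F g"
  using F_add[of f "\<lambda>n. - g n"] F_uminus[of g] by simp

lemma F_const: "cscale c 1 = F (\<lambda>n. c)"
  using F_cs[of c "\<lambda>n. 1"] F_1 by simp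

lemma F_sum: "finite S \<Longrightarrow> (\<Sum>i\<in>S. F (g i)) = F (\<lambda>n. \<Sum>i\<in>S. g i n)"
  by (induction S rule: finite_induct) (simp_all add: F_0 F_add)

lemma F_pow: "F f ^ i = F (\<lambda>n. f n ^ i)"
  by (induction i) (simp_all add: F_1 F_mul)

lemma F_mul': "F f * (F g * X) = F (\<lambda>n. f n * g n) * X"
  by (simp add: F_mul mult.assoc)
lemma comm_bd': "F f * (bd * X) = bd * (F (\<lambda>n. f (n + 1)) * X)"
  by (simp add: comm_bd flip: mult.assoc)
lemma comm_b2: "b * F g = F (\<lambda>n. g (n + 1)) * b"
  using comm_b[of "\<lambda>n. g (n+1)"] by simp
lemma comm_b2': "b * (F g * X) = F (\<lambda>n. g (n + 1)) * (b * X)"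
  by (simp add: comm_b2 flip: mult.assoc)
lemma bdb': "bd * (b * X) = F \<Phi> * X" by (simp add: bdb flip: mult.assoc)
lemma bbd': "b * (bd * X) = F (\<lambda>n. \<Phi> (n + 1)) * X" by (simp add: bbd flip: mult.assoc)
lemma bdFb: "bd * (F g * b) = F (\<lambda>n. \<Phi> n * g (n - 1))"
  by (simp add: comm_b bdb' F_mul)

definition nf where
  "nf a0 a1 a2 a3 a4 = F a0 + bd * F a1 + F a2 * b + bd * (bd * F a3) + F a4 * (b * b)"

lemma nf_cong: "a0 = c0 \<Longrightarrow> a1 = c1 \<Longrightarrow> a2 = c2 \<Longrightarrow> a3 = c3 \<Longrightarrow> a4 = c4 \<Longrightarrow>
  nf a0 a1 a2 a3 a4 = nf c0 c1 c2 c3 c4" by simp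

lemma nf_add: "nf a0 a1 a2 a3 a4 + nf c0 c1 c2 c3 c4 =
  nf (\<lambda>n. a0 n + c0 n) (\<lambda>n. a1 n + c1 n) (\<lambda>n. a2 n + c2 n) (\<lambda>n. a3 n + c3 n) (\<lambda>n. a4 n + c4 n)"
  unfolding nf_def F_add by (simp add: distrib_left distrib_right add_ac)

lemma nf_diff: "nf a0 a1 a2 a3 a4 - nf c0 c1 c2 c3 c4 =
  nf (\<lambda>n. a0 n - c0 n) (\<lambda>n. a1 n - c1 n) (\<lambda>n. a2 n - c2 n) (\<lambda>n. a3 n - c3 n) (\<lambda>n. a4 n - c4 n)"
  unfolding nf_def F_diff by (simp add: right_diff_distrib left_diff_distrib algebra_simps)

lemma nf_cs: "cscale c (nf a0 a1 a2 a3 a4) =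
  nf (\<lambda>n. c * a0 n) (\<lambda>n. c * a1 n) (\<lambda>n. c * a2 n) (\<lambda>n. c * a3 n) (\<lambda>n. c * a4 n)"
  unfolding nf_def F_cs by (simp add: cscale_add_right mult_cscale_left mult_cscale_right)

lemma nf_F: "F f = nf f (\<lambda>n. 0) (\<lambda>n. 0) (\<lambda>n. 0) (\<lambda>n. 0)"
  by (simp add: nf_def F_0)

lemma nf_zero: "nf (\<lambda>n. 0) (\<lambda>n. 0) (\<lambda>n. 0) (\<lambda>n. 0) (\<lambda>n. 0) = 0"
  by (simp add: nf_def F_0)

lemma nf_sum: "finite S \<Longrightarrow> (\<Sum>i\<in>S. nf (a0 i) (a1 i) (a2 i) (a3 i) (a4 i)) =
  nf (\<lambda>n. \<Sum>i\<in>S. a0 i n) (\<lambda>n. \<Sum>i\<in>S. a1 i n) (\<lambda>n. \<Sum>i\<in>S. a2 i n) (\<lambda>n. \<Sum>i\<in>S. a3 i n) (\<lambda>n. \<Sum>i\<in>S. a4 i n)"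
  by (induction S rule: finite_induct) (simp_all add: nf_zero nf_add)

lemma nf_add_F1: "F f + nf a0 a1 a2 a3 a4 = nf (\<lambda>n. f n + a0 n) a1 a2 a3 a4"
  by (simp add: nf_F[of f] nf_add)
lemma nf_add_F2: "nf a0 a1 a2 a3 a4 + F f = nf (\<lambda>n. a0 n + f n) a1 a2 a3 a4"
  by (simp add: nf_F[of f] nf_add)
lemma nf_diff_F1: "F f - nf a0 a1 a2 a3 a4 = nf (\<lambda>n. f n - a0 n) (\<lambda>n. - a1 n) (\<lambda>n. - a2 n) (\<lambda>n. - a3 n) (\<lambda>n. - a4 n)"
  by (simp add: nf_F[of f] nf_diff)
lemma nf_diff_F2: "nf a0 a1 a2 a3 a4 - F f = nf (\<lambda>n. a0 n - f n) a1 a2 a3 a4"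
  by (simp add: nf_F[of f] nf_diff)

lemma F_shift2: "F f * (bd * (bd * X)) = bd * (bd * (F (\<lambda>n. f (n + 2)) * X))"
proof -
  have e: "(\<lambda>n. f (n + 1 + 1)) = (\<lambda>n. f (n+2))" by (simp add: add.assoc)
  show ?thesis by (simp only: comm_bd' e)
qed

lemma F_shiftb2: "(X * (b * b)) * F f = X * F (\<lambda>n. f (n + 2)) * (b * b)"
proof -
  have e: "(\<lambda>n. f (n + 1 + 1)) = (\<lambda>n. f (n+2))" by (simp add: add.assoc)
  have "b * (b * F f) = F (\<lambda>n. f (n + 2)) * (b * b)"
    by (simp only: comm_b2 comm_b2' e mult.assoc)
  thus ?thesis by (simp only: mult.assoc)
qed

lemma Fmul_nf: "F f * nf a0 a1 a2 a3 a4 =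
  nf (\<lambda>n. f n * a0 n) (\<lambda>n. f (n+1) * a1 n) (\<lambda>n. f n * a2 n) (\<lambda>n. f (n+2) * a3 n) (\<lambda>n. f n * a4 n)"
proof -
  have 1: "F f * (bd * F a1) = bd * F (\<lambda>n. f (n+1) * a1 n)" by (simp only: comm_bd' F_mul)
  have 2: "F f * (F a2 * b) = F (\<lambda>n. f n * a2 n) * b" by (simp only: F_mul mult.assoc)
  have 3: "F f * (bd * (bd * F a3)) = bd * (bd * F (\<lambda>n. f (n+2) * a3 n))" by (simp only: F_shift2 F_mul)
  have 4: "F f * (F a4 * (b * b)) = F (\<lambda>n. f n * a4 n) * (b * b)" by (simp only: F_mul mult.assoc)
  show ?thesis unfolding nf_def distrib_left 1 2 3 4 F_mul ..
qed

lemma nf_mul_F: "nf a0 a1 a2 a3 a4 * F f =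
  nf (\<lambda>n. a0 n * f n) (\<lambda>n. a1 n * f n) (\<lambda>n. a2 n * f (n+1)) (\<lambda>n. a3 n * f n) (\<lambda>n. a4 n * f (n+2))"
proof -
  have 1: "bd * F a1 * F f = bd * F (\<lambda>n. a1 n * f n)" by (simp only: F_mul mult.assoc)
  have 2: "F a2 * b * F f = F (\<lambda>n. a2 n * f (n+1)) * b" by (simp only: F_mul mult.assoc comm_b2)
  have 3: "bd * (bd * F a3) * F f = bd * (bd * F (\<lambda>n. a3 n * f n))" by (simp only: F_mul mult.assoc)
  have 4: "F a4 * (b * b) * F f = F (\<lambda>n. a4 n * f (n+2)) * (b * b)"
    by (simp only: F_shiftb2 F_mul)
  show ?thesis unfolding nf_def distrib_right 1 2 3 4 F_mul ..
qed

lemma nf_mul: "nf h p q (\<lambda>n. 0) (\<lambda>n. 0) * nf h' p' q' (\<lambda>n. 0) (\<lambda>n. 0) =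
  nf (\<lambda>n. h n * h' n + \<Phi> n * (p (n-1) * q' (n-1)) + q n * (\<Phi> (n+1) * p' n))
     (\<lambda>n. h (n+1) * p' n + p n * h' n) (\<lambda>n. h n * q' n + q n * h' (n+1))
     (\<lambda>n. p (n+1) * p' n) (\<lambda>n. q n * q' (n+1))"
proof -
  have Z: "nf x y z (\<lambda>n. 0) (\<lambda>n. 0) = F x + bd * F y + F z * b" for x y z
    by (simp add: nf_def F_0)
  have e1: "F h * F h' = F (\<lambda>n. h n * h' n)" by (rule F_mul[symmetric])
  have e2: "F h * (bd * F p') = bd * F (\<lambda>n. h (n+1) * p' n)" by (simp only: comm_bd' F_mul)
  have e3: "F h * (F q' * b) = F (\<lambda>n. h n * q' n) * b" by (simp only: F_mul mult.assoc)
  have e4: "bd * F p * F h' = bd * F (\<lambda>n. p n * h' n)" by (simp only: F_mul mult.assoc)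
  have e5: "bd * F p * (bd * F p') = bd * (bd * F (\<lambda>n. p (n+1) * p' n))"
    by (simp only: mult.assoc comm_bd' F_mul)
  have e6: "bd * F p * (F q' * b) = F (\<lambda>n. \<Phi> n * (p (n-1) * q' (n-1)))"
  proof -
    have "bd * F p * (F q' * b) = bd * (F (\<lambda>n. p n * q' n) * b)" by (simp only: mult.assoc F_mul')
    also have "\<dots> = F (\<lambda>n. \<Phi> n * (p (n-1) * q' (n-1)))" by (simp only: bdFb)
    finally show ?thesis .
  qed
  have e7: "F q * b * F h' = F (\<lambda>n. q n * h' (n+1)) * b" by (simp only: F_mul mult.assoc comm_b2)
  have e8: "F q * b * (bd * F p') = F (\<lambda>n. q n * (\<Phi> (n+1) * p' n))"
    by (simp only: F_mul mult.assoc bbd')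
  have e9: "F q * b * (F q' * b) = F (\<lambda>n. q n * q' (n+1)) * (b * b)"
    by (simp only: F_mul mult.assoc comm_b2')
  have "nf h p q (\<lambda>n. 0) (\<lambda>n. 0) * nf h' p' q' (\<lambda>n. 0) (\<lambda>n. 0) =
     F h * F h' + F h * (bd * F p') + F h * (F q' * b)
   + (bd * F p * F h' + bd * F p * (bd * F p') + bd * F p * (F q' * b))
   + (F q * b * F h' + F q * b * (bd * F p') + F q * b * (F q' * b))"
    unfolding Z distrib_left distrib_right by (simp only: add_ac)
  also have "\<dots> = nf (\<lambda>n. h n * h' n + \<Phi> n * (p (n-1) * q' (n-1)) + q n * (\<Phi> (n+1) * p' n))
     (\<lambda>n. h (n+1) * p' n + p n * h' n) (\<lambda>n. h n * q' n + q n * h' (n+1))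
     (\<lambda>n. p (n+1) * p' n) (\<lambda>n. q n * q' (n+1))"
    unfolding e1 e2 e3 e4 e5 e6 e7 e8 e9 nf_def F_add distrib_left distrib_right
    by (simp only: add_ac)
  finally show ?thesis .
qed

end


lemma lc: "(x::complex) - y = c * (u - v) \<Longrightarrow> u = v \<Longrightarrow> x = y" by simp

context alg_setup begin
lemmas nfsimps = Fmul_nf nf_mul_F nf_diff nf_add nf_cs nf_sum nf_add_F1 nf_add_F2 nf_diff_F1 nf_diff_F2
  F_pow F_cs[symmetric] F_sum F_const F_add[symmetric] power2_eq_square nf_mul commutator_def anticommutator_def

lemma AC:
  fixes A h \<rho> :: "int \<Rightarrow> complex"
  assumes q1: "\<forall>n. (fdiff A n)\<^sup>2 = \<delta> + \<beta> * (A n + A (n + 1))"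
  and q2: "\<forall>n. (\<Sum>i=1..L+1. \<alpha> i * A n ^ i) + \<delta> * h n + \<epsilon> + 2 * \<beta> * A n * h n = 0"
  shows "commutator (F A) (nf (\<lambda>n. 0) (\<lambda>n. fdiff A n * \<rho> n) (\<lambda>n. - (\<rho> n * fdiff A n)) (\<lambda>n. 0) (\<lambda>n. 0))
    = (\<Sum>i=1..L+1. cscale (\<alpha> i) (F A ^ i)) + cscale \<delta> (nf h \<rho> \<rho> (\<lambda>n. 0) (\<lambda>n. 0)) + cscale \<epsilon> 1
                               + cscale \<beta> (anticommutator (F A) (nf h \<rho> \<rho> (\<lambda>n. 0) (\<lambda>n. 0)))"
  apply (simp add: nfsimps)
  apply (rule nf_cong)
  subgoal
    apply (rule ext)
    subgoal for n
      apply (rule lc[where c="-1" and u="(\<Sum>i=1..L+1. \<alpha> i * A n ^ i) + \<delta> * h n + \<epsilon> + 2 * \<beta> * A n * h n" and v=0])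
      subgoal
      proof -
        have e: "(\<Sum>i=1..L+1. \<alpha> i * A n ^ i) = (\<Sum>i = Suc 0..L. \<alpha> i * A n ^ i) + \<alpha> (Suc L) * (A n * A n ^ L)" by simp
        show ?thesis unfolding e by algebra
      qed
      subgoal using q2 by simp
      done
    done
  subgoal
    apply (rule ext)
    subgoal for n
      apply (rule lc[where c="\<rho> n" and u="(fdiff A n)\<^sup>2" and v="\<delta> + \<beta> * (A n + A (n + 1))"])
      subgoal unfolding fdiff_def by algebra
      subgoal using q1 by simp
      done
    done
  subgoal
    apply (rule ext)
    subgoal for n
      apply (rule lc[where c="\<rho> n" and u="(fdiff A n)\<^sup>2" and v="\<delta> + \<beta> * (A n + A (n + 1))"])
      subgoal unfolding fdiff_def by algebra
      subgoal using q1 by simp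
      done
    done
  by simp_all

lemma BC:
  fixes A h \<rho> :: "int \<Rightarrow> complex"
  assumes q3: "\<forall>n. fdiff A n - fdiff A (n + 1) = - \<beta>"
  and q4: "\<forall>n. fdiff A n * (h (n + 1) - h n) =
               - \<beta> * (h (n + 1) + h n) + (\<Sum>i=1..L. \<omega> i * (A (n + 1) ^ i + A n ^ i)) + \<eta>"
  and q5: "\<forall>n. 2 * \<Phi> (n + 1) * (\<rho> n)\<^sup>2 * fdiff A n - 2 * \<Phi> n * (\<rho> (n - 1))\<^sup>2 * fdiff A (n - 1) =
               \<zeta> + (\<Sum>i=1..M. lam i * A n ^ i) - \<beta> * (h n)\<^sup>2
               - \<beta> * ((\<rho> (n - 1))\<^sup>2 * \<Phi> n + (\<rho> n)\<^sup>2 * \<Phi> (n + 1))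
               + \<eta> * h n + 2 * (\<Sum>j=1..L. \<omega> j * A n ^ j) * h n"
  shows "commutator (nf h \<rho> \<rho> (\<lambda>n. 0) (\<lambda>n. 0)) (nf (\<lambda>n. 0) (\<lambda>n. fdiff A n * \<rho> n) (\<lambda>n. - (\<rho> n * fdiff A n)) (\<lambda>n. 0) (\<lambda>n. 0))
    = (\<Sum>i=1..M. cscale (lam i) (F A ^ i)) - cscale \<beta> ((nf h \<rho> \<rho> (\<lambda>n. 0) (\<lambda>n. 0)) ^ 2) + cscale \<eta> (nf h \<rho> \<rho> (\<lambda>n. 0) (\<lambda>n. 0))
                               + (\<Sum>i=1..L. cscale (\<omega> i) (anticommutator (F A ^ i) (nf h \<rho> \<rho> (\<lambda>n. 0) (\<lambda>n. 0)))) + cscale \<zeta> 1"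
  apply (simp add: nfsimps)
  apply (rule nf_cong)
  subgoal
    apply (rule ext)
    subgoal for n
    proof -
      have s: "(\<Sum>i = Suc 0..L. \<omega> i * (2 * (h n * A n ^ i))) = 2 * (\<Sum>j=1..L. \<omega> j * A n ^ j) * h n"
        by (simp add: sum_distrib_left sum_distrib_right mult_ac)
      have s2: "(\<Sum>i = Suc 0..M. lam i * A n ^ i) = (\<Sum>i=1..M. lam i * A n ^ i)" by simp
      show ?thesis unfolding s s2
        apply (rule lc[where c=1 and u="2 * \<Phi> (n + 1) * (\<rho> n)\<^sup>2 * fdiff A n - 2 * \<Phi> n * (\<rho> (n - 1))\<^sup>2 * fdiff A (n - 1)"
           and v="\<zeta> + (\<Sum>i=1..M. lam i * A n ^ i) - \<beta> * (h n)\<^sup>2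
               - \<beta> * ((\<rho> (n - 1))\<^sup>2 * \<Phi> n + (\<rho> n)\<^sup>2 * \<Phi> (n + 1))
               + \<eta> * h n + 2 * (\<Sum>j=1..L. \<omega> j * A n ^ j) * h n"])
        subgoal by algebra
        subgoal using q5 by simp
        done
    qed
    done
  subgoal
    apply (rule ext)
    subgoal for n
    proof -
      have s: "(\<Sum>i = Suc 0..L. \<omega> i * (A (n + 1) ^ i * \<rho> n + \<rho> n * A n ^ i)) = \<rho> n * (\<Sum>i=1..L. \<omega> i * (A (n + 1) ^ i + A n ^ i))"
        by (simp add: sum_distrib_left algebra_simps)
      show ?thesis unfolding s
        apply (rule lc[where c="\<rho> n" and u="fdiff A n * (h (n + 1) - h n)"
           and v="- \<beta> * (h (n + 1) + h n) + (\<Sum>i=1..L. \<omega> i * (A (n + 1) ^ i + A n ^ i)) + \<eta>"])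
        subgoal by algebra
        subgoal using q4 by simp
        done
    qed
    done
  subgoal
    apply (rule ext)
    subgoal for n
    proof -
      have s: "(\<Sum>i = Suc 0..L. \<omega> i * (A n ^ i * \<rho> n + \<rho> n * A (n + 1) ^ i)) = \<rho> n * (\<Sum>i=1..L. \<omega> i * (A (n + 1) ^ i + A n ^ i))"
        by (simp add: sum_distrib_left algebra_simps)
      show ?thesis unfolding s
        apply (rule lc[where c="\<rho> n" and u="fdiff A n * (h (n + 1) - h n)"
           and v="- \<beta> * (h (n + 1) + h n) + (\<Sum>i=1..L. \<omega> i * (A (n + 1) ^ i + A n ^ i)) + \<eta>"])
        subgoal by algebra
        subgoal using q4 by simp
        done
    qed
    done
  subgoal
    apply (rule ext)
    subgoal for n
      apply (rule lc[where c="\<rho> n * \<rho> (n+1)" and u="fdiff A n - fdiff A (n + 1)" and v="- \<beta>"])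
      subgoal by algebra
      subgoal using q3 by simp
      done
    done
  subgoal
    apply (rule ext)
    subgoal for n
      apply (rule lc[where c="\<rho> n * \<rho> (n+1)" and u="fdiff A n - fdiff A (n + 1)" and v="- \<beta>"])
      subgoal by algebra
      subgoal using q3 by simp
      done
    done
  done
end

lemma q4div: "- (x::complex) / d = - 4 * x / (4 * d)"
  by (cases "d = 0") (simp_all add: field_simps)

theorem proposition7:
  fixes M :: nat
    and \<alpha> lam \<omega> :: "nat \<Rightarrow> complex"
    and \<beta> \<delta> \<epsilon> \<eta> \<zeta> :: complex
    and F :: "(int \<Rightarrow> complex) \<Rightarrow> 'a::complex_algebra_1"
    and b bd :: 'a
    and \<Phi> A h \<rho> :: "int \<Rightarrow> complex"
  assumes M1: "M \<ge> 1"
    and hom: "fun_alg_hom F"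
    and comm_bd: "\<And>f. F f * bd = bd * F (\<lambda>n. f (n + 1))"
    and comm_b: "\<And>f. F f * b = b * F (\<lambda>n. f (n - 1))"
    and bdb: "bd * b = F \<Phi>"
    and bbd: "b * bd = F (\<lambda>n. \<Phi> (n + 1))"
  defines "L \<equiv> M div 2"
    and "AA \<equiv> F A"
    and "BB \<equiv> F h + bd * F \<rho> + F \<rho> * b"
    and "CC \<equiv> bd * F (fdiff A) * F \<rho> - F \<rho> * F (fdiff A) * b"
  shows "(commutator AA BB = CC)
     \<and> ((\<forall>n. (fdiff A n)\<^sup>2 = \<delta> + \<beta> * (A n + A (n + 1))) \<and>
         (\<forall>n. (\<Sum>i=1..L+1. \<alpha> i * A n ^ i) + \<delta> * h n + \<epsilon> + 2 * \<beta> * A n * h n = 0) \<and>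
         (\<forall>n. fdiff A n - fdiff A (n + 1) = - \<beta>) \<and>
         (\<forall>n. fdiff A n * (h (n + 1) - h n) =
               - \<beta> * (h (n + 1) + h n) + (\<Sum>i=1..L. \<omega> i * (A (n + 1) ^ i + A n ^ i)) + \<eta>) \<and>
         (\<forall>n. 2 * \<Phi> (n + 1) * (\<rho> n)\<^sup>2 * fdiff A n - 2 * \<Phi> n * (\<rho> (n - 1))\<^sup>2 * fdiff A (n - 1) =
               \<zeta> + (\<Sum>i=1..M. lam i * A n ^ i) - \<beta> * (h n)\<^sup>2
               - \<beta> * ((\<rho> (n - 1))\<^sup>2 * \<Phi> n + (\<rho> n)\<^sup>2 * \<Phi> (n + 1))
               + \<eta> * h n + 2 * (\<Sum>j=1..L. \<omega> j * A n ^ j) * h n)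
         \<longrightarrow>
         commutator AA CC = (\<Sum>i=1..L+1. cscale (\<alpha> i) (AA ^ i)) + cscale \<delta> BB + cscale \<epsilon> 1
                               + cscale \<beta> (anticommutator AA BB) \<and>
         commutator BB CC = (\<Sum>i=1..M. cscale (lam i) (AA ^ i)) - cscale \<beta> (BB ^ 2) + cscale \<eta> BB
                               + (\<Sum>i=1..L. cscale (\<omega> i) (anticommutator (AA ^ i) BB)) + cscale \<zeta> 1)
     \<and> (\<forall>(c1::complex) (s::complex) (A1::int \<Rightarrow> complex). \<beta> = 0 \<and> s\<^sup>2 = \<delta> \<and>
           (\<forall>n. A1 n = s * of_int n + c1) \<longrightarrow>
           (\<forall>n. (fdiff A1 n)\<^sup>2 = \<delta> + \<beta> * (A1 n + A1 (n + 1))) \<and>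
           (\<forall>n. fdiff A1 n - fdiff A1 (n + 1) = - \<beta>))
     \<and> (\<forall>(c1::complex) (A1::int \<Rightarrow> complex). \<beta> \<noteq> 0 \<and>
           (\<forall>n. A1 n = - \<beta> / 8 - \<delta> / (2 * \<beta>) + \<beta> / 2 * (of_int n + c1)\<^sup>2) \<longrightarrow>
           (\<forall>n. (fdiff A1 n)\<^sup>2 = \<delta> + \<beta> * (A1 n + A1 (n + 1))) \<and>
           (\<forall>n. fdiff A1 n - fdiff A1 (n + 1) = - \<beta>))
     \<and> (\<forall>(A1::int \<Rightarrow> complex) (h1::int \<Rightarrow> complex).
           (\<forall>n. \<delta> + 2 * \<beta> * A1 n \<noteq> 0) \<and>
           (\<forall>n. h1 n = - ((\<Sum>i=1..L+1. \<alpha> i * A1 n ^ i) + \<epsilon>) / (\<delta> + 2 * \<beta> * A1 n)) \<longrightarrow>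
           (\<forall>n. (\<Sum>i=1..L+1. \<alpha> i * A1 n ^ i) + \<delta> * h1 n + \<epsilon> + 2 * \<beta> * A1 n * h1 n = 0))
     \<and> (\<forall>(c1::complex) (s::complex) (A1::int \<Rightarrow> complex) (h1::int \<Rightarrow> complex). \<beta> = 0 \<and> s\<^sup>2 = \<delta> \<and>
           (\<forall>n. A1 n = s * of_int n + c1) \<and>
           (\<forall>n. \<delta> + 2 * \<beta> * A1 n \<noteq> 0) \<and>
           (\<forall>n. h1 n = - ((\<Sum>i=1..L+1. \<alpha> i * A1 n ^ i) + \<epsilon>) / (\<delta> + 2 * \<beta> * A1 n)) \<longrightarrow>
           (\<forall>n. h1 n = - 4 * ((\<Sum>i=1..L+1. \<alpha> i * A1 n ^ i) + \<epsilon>)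
                        / (4 * (deriv (\<lambda>x::complex. s * x + c1) (of_int n :: complex))\<^sup>2 - \<beta>\<^sup>2)))
     \<and> (\<forall>(c1::complex) (A1::int \<Rightarrow> complex) (h1::int \<Rightarrow> complex). \<beta> \<noteq> 0 \<and>
           (\<forall>n. A1 n = - \<beta> / 8 - \<delta> / (2 * \<beta>) + \<beta> / 2 * (of_int n + c1)\<^sup>2) \<and>
           (\<forall>n. \<delta> + 2 * \<beta> * A1 n \<noteq> 0) \<and>
           (\<forall>n. h1 n = - ((\<Sum>i=1..L+1. \<alpha> i * A1 n ^ i) + \<epsilon>) / (\<delta> + 2 * \<beta> * A1 n)) \<longrightarrow>
           (\<forall>n. h1 n = - 4 * ((\<Sum>i=1..L+1. \<alpha> i * A1 n ^ i) + \<epsilon>)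
                        / (4 * (deriv (\<lambda>x::complex. - \<beta> / 8 - \<delta> / (2 * \<beta>) + \<beta> / 2 * (x + c1)\<^sup>2) (of_int n :: complex))\<^sup>2 - \<beta>\<^sup>2)))"
  proof -
  interpret S: alg_setup F b bd \<Phi> using hom comm_bd comm_b bdb bbd by unfold_locales
  have BBn: "BB = S.nf h \<rho> \<rho> (\<lambda>n. 0) (\<lambda>n. 0)" unfolding BB_def by (simp add: S.nf_def S.F_0)
  have CCn: "CC = S.nf (\<lambda>n. 0) (\<lambda>n. fdiff A n * \<rho> n) (\<lambda>n. - (\<rho> n * fdiff A n)) (\<lambda>n. 0) (\<lambda>n. 0)"
    unfolding CC_def by (simp add: S.nf_def S.F_0 S.F_uminus mult.assoc S.F_mul)
  have P1: "commutator AA BB = CC"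
    unfolding AA_def BBn CCn commutator_def
    apply (simp add: S.Fmul_nf S.nf_mul_F S.nf_diff)
    apply (rule S.nf_cong)
    apply (auto simp: fdiff_def algebra_simps)
    done
  have P2: "((\<forall>n. (fdiff A n)\<^sup>2 = \<delta> + \<beta> * (A n + A (n + 1))) \<and>
         (\<forall>n. (\<Sum>i=1..L+1. \<alpha> i * A n ^ i) + \<delta> * h n + \<epsilon> + 2 * \<beta> * A n * h n = 0) \<and>
         (\<forall>n. fdiff A n - fdiff A (n + 1) = - \<beta>) \<and>
         (\<forall>n. fdiff A n * (h (n + 1) - h n) =
               - \<beta> * (h (n + 1) + h n) + (\<Sum>i=1..L. \<omega> i * (A (n + 1) ^ i + A n ^ i)) + \<eta>) \<and>
         (\<forall>n. 2 * \<Phi> (n + 1) * (\<rho> n)\<^sup>2 * fdiff A n - 2 * \<Phi> n * (\<rho> (n - 1))\<^sup>2 * fdiff A (n - 1) =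
               \<zeta> + (\<Sum>i=1..M. lam i * A n ^ i) - \<beta> * (h n)\<^sup>2
               - \<beta> * ((\<rho> (n - 1))\<^sup>2 * \<Phi> n + (\<rho> n)\<^sup>2 * \<Phi> (n + 1))
               + \<eta> * h n + 2 * (\<Sum>j=1..L. \<omega> j * A n ^ j) * h n)
         \<longrightarrow>
         commutator AA CC = (\<Sum>i=1..L+1. cscale (\<alpha> i) (AA ^ i)) + cscale \<delta> BB + cscale \<epsilon> 1
                               + cscale \<beta> (anticommutator AA BB) \<and>
         commutator BB CC = (\<Sum>i=1..M. cscale (lam i) (AA ^ i)) - cscale \<beta> (BB ^ 2) + cscale \<eta> BB
                               + (\<Sum>i=1..L. cscale (\<omega> i) (anticommutator (AA ^ i) BB)) + cscale \<zeta> 1)"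
    unfolding AA_def BBn CCn
  proof (intro impI conjI, goal_cases)
    case 1 thus ?case by (intro S.AC) auto
  next
    case 2 thus ?case by (intro S.BC) auto
  qed
  have P3: "\<forall>(c1::complex) (s::complex) (A1::int \<Rightarrow> complex). \<beta> = 0 \<and> s\<^sup>2 = \<delta> \<and>
           (\<forall>n. A1 n = s * of_int n + c1) \<longrightarrow>
           (\<forall>n. (fdiff A1 n)\<^sup>2 = \<delta> + \<beta> * (A1 n + A1 (n + 1))) \<and>
           (\<forall>n. fdiff A1 n - fdiff A1 (n + 1) = - \<beta>)"
    by (auto simp: fdiff_def algebra_simps)
  have P4: "\<forall>(c1::complex) (A1::int \<Rightarrow> complex). \<beta> \<noteq> 0 \<and>
           (\<forall>n. A1 n = - \<beta> / 8 - \<delta> / (2 * \<beta>) + \<beta> / 2 * (of_int n + c1)\<^sup>2) \<longrightarrow>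
           (\<forall>n. (fdiff A1 n)\<^sup>2 = \<delta> + \<beta> * (A1 n + A1 (n + 1))) \<and>
           (\<forall>n. fdiff A1 n - fdiff A1 (n + 1) = - \<beta>)"
  proof (intro allI impI conjI)
    fix c1 :: complex and A1 :: "int \<Rightarrow> complex" and n :: int
    assume H: "\<beta> \<noteq> 0 \<and> (\<forall>n. A1 n = - \<beta> / 8 - \<delta> / (2 * \<beta>) + \<beta> / 2 * (of_int n + c1)\<^sup>2)"
    hence bn: "\<beta> \<noteq> 0" and Ae: "\<And>n. A1 n = - \<beta> / 8 - \<delta> / (2 * \<beta>) + \<beta> / 2 * (of_int n + c1)\<^sup>2" by auto
    show "(fdiff A1 n)\<^sup>2 = \<delta> + \<beta> * (A1 n + A1 (n + 1))"
      unfolding fdiff_def Ae using bn by (simp add: field_simps power2_eq_square)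
    show "fdiff A1 n - fdiff A1 (n + 1) = - \<beta>"
      unfolding fdiff_def Ae using bn by (simp add: field_simps power2_eq_square)
  qed
  have P5: "\<forall>(A1::int \<Rightarrow> complex) (h1::int \<Rightarrow> complex).
           (\<forall>n. \<delta> + 2 * \<beta> * A1 n \<noteq> 0) \<and>
           (\<forall>n. h1 n = - ((\<Sum>i=1..L+1. \<alpha> i * A1 n ^ i) + \<epsilon>) / (\<delta> + 2 * \<beta> * A1 n)) \<longrightarrow>
           (\<forall>n. (\<Sum>i=1..L+1. \<alpha> i * A1 n ^ i) + \<delta> * h1 n + \<epsilon> + 2 * \<beta> * A1 n * h1 n = 0)"
  proof (intro allI impI)
    fix A1 h1 :: "int \<Rightarrow> complex" and n :: int
    assume H: "(\<forall>n. \<delta> + 2 * \<beta> * A1 n \<noteq> 0) \<and>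
           (\<forall>n. h1 n = - ((\<Sum>i=1..L+1. \<alpha> i * A1 n ^ i) + \<epsilon>) / (\<delta> + 2 * \<beta> * A1 n))"
    hence nz: "\<delta> + 2 * \<beta> * A1 n \<noteq> 0" and he: "h1 n = - ((\<Sum>i=1..L+1. \<alpha> i * A1 n ^ i) + \<epsilon>) / (\<delta> + 2 * \<beta> * A1 n)" by auto
    have "\<delta> * h1 n + 2 * \<beta> * A1 n * h1 n = (\<delta> + 2 * \<beta> * A1 n) * h1 n" by algebra
    also have "\<dots> = - ((\<Sum>i=1..L+1. \<alpha> i * A1 n ^ i) + \<epsilon>)" unfolding he using nz by simp
    finally show "(\<Sum>i=1..L+1. \<alpha> i * A1 n ^ i) + \<delta> * h1 n + \<epsilon> + 2 * \<beta> * A1 n * h1 n = 0"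
      by algebra
  qed
  have D1: "deriv (\<lambda>x::complex. s * x + c1) z = s" for s c1 z
    by (rule DERIV_imp_deriv) (auto intro!: derivative_eq_intros)
  have D2: "deriv (\<lambda>x::complex. - \<beta> / 8 - \<delta> / (2 * \<beta>) + \<beta> / 2 * (x + c1)\<^sup>2) z = \<beta> * (z + c1)" for c1 z
    by (rule DERIV_imp_deriv) (auto intro!: derivative_eq_intros simp: field_simps)
  have P6: "\<forall>(c1::complex) (s::complex) (A1::int \<Rightarrow> complex) (h1::int \<Rightarrow> complex). \<beta> = 0 \<and> s\<^sup>2 = \<delta> \<and>
           (\<forall>n. A1 n = s * of_int n + c1) \<and>
           (\<forall>n. \<delta> + 2 * \<beta> * A1 n \<noteq> 0) \<and>
           (\<forall>n. h1 n = - ((\<Sum>i=1..L+1. \<alpha> i * A1 n ^ i) + \<epsilon>) / (\<delta> + 2 * \<beta> * A1 n)) \<longrightarrow>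
           (\<forall>n. h1 n = - 4 * ((\<Sum>i=1..L+1. \<alpha> i * A1 n ^ i) + \<epsilon>)
                        / (4 * (deriv (\<lambda>x::complex. s * x + c1) (of_int n :: complex))\<^sup>2 - \<beta>\<^sup>2))"
  proof (intro allI impI)
    fix c1 s :: complex and A1 h1 :: "int \<Rightarrow> complex" and n :: int
    assume H: "\<beta> = 0 \<and> s\<^sup>2 = \<delta> \<and>
           (\<forall>n. A1 n = s * of_int n + c1) \<and>
           (\<forall>n. \<delta> + 2 * \<beta> * A1 n \<noteq> 0) \<and>
           (\<forall>n. h1 n = - ((\<Sum>i=1..L+1. \<alpha> i * A1 n ^ i) + \<epsilon>) / (\<delta> + 2 * \<beta> * A1 n))"
    hence b0: "\<beta> = 0" and ss: "s\<^sup>2 = \<delta>" and nz: "\<delta> + 2 * \<beta> * A1 n \<noteq> 0"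
      and he: "h1 n = - ((\<Sum>i=1..L+1. \<alpha> i * A1 n ^ i) + \<epsilon>) / (\<delta> + 2 * \<beta> * A1 n)" by auto
    show "h1 n = - 4 * ((\<Sum>i=1..L+1. \<alpha> i * A1 n ^ i) + \<epsilon>)
                        / (4 * (deriv (\<lambda>x::complex. s * x + c1) (of_int n :: complex))\<^sup>2 - \<beta>\<^sup>2)"
      unfolding D1 he ss using b0 nz by (simp add: field_simps)
  qed
  have P7: "\<forall>(c1::complex) (A1::int \<Rightarrow> complex) (h1::int \<Rightarrow> complex). \<beta> \<noteq> 0 \<and>
           (\<forall>n. A1 n = - \<beta> / 8 - \<delta> / (2 * \<beta>) + \<beta> / 2 * (of_int n + c1)\<^sup>2) \<and>
           (\<forall>n. \<delta> + 2 * \<beta> * A1 n \<noteq> 0) \<and>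
           (\<forall>n. h1 n = - ((\<Sum>i=1..L+1. \<alpha> i * A1 n ^ i) + \<epsilon>) / (\<delta> + 2 * \<beta> * A1 n)) \<longrightarrow>
           (\<forall>n. h1 n = - 4 * ((\<Sum>i=1..L+1. \<alpha> i * A1 n ^ i) + \<epsilon>)
                        / (4 * (deriv (\<lambda>x::complex. - \<beta> / 8 - \<delta> / (2 * \<beta>) + \<beta> / 2 * (x + c1)\<^sup>2) (of_int n :: complex))\<^sup>2 - \<beta>\<^sup>2))"
  proof (intro allI impI)
    fix c1 :: complex and A1 h1 :: "int \<Rightarrow> complex" and n :: int
    assume H: "\<beta> \<noteq> 0 \<and>
           (\<forall>n. A1 n = - \<beta> / 8 - \<delta> / (2 * \<beta>) + \<beta> / 2 * (of_int n + c1)\<^sup>2) \<and>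
           (\<forall>n. \<delta> + 2 * \<beta> * A1 n \<noteq> 0) \<and>
           (\<forall>n. h1 n = - ((\<Sum>i=1..L+1. \<alpha> i * A1 n ^ i) + \<epsilon>) / (\<delta> + 2 * \<beta> * A1 n))"
    hence bn: "\<beta> \<noteq> 0" and Ae: "A1 n = - \<beta> / 8 - \<delta> / (2 * \<beta>) + \<beta> / 2 * (of_int n + c1)\<^sup>2"
      and he: "h1 n = - ((\<Sum>i=1..L+1. \<alpha> i * A1 n ^ i) + \<epsilon>) / (\<delta> + 2 * \<beta> * A1 n)" by auto
    have den: "4 * (\<beta> * (of_int n + c1))\<^sup>2 - \<beta>\<^sup>2 = 4 * (\<delta> + 2 * \<beta> * A1 n)"
      unfolding Ae using bn by (simp add: field_simps power2_eq_square)
    show "h1 n = - 4 * ((\<Sum>i=1..L+1. \<alpha> i * A1 n ^ i) + \<epsilon>)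
                        / (4 * (deriv (\<lambda>x::complex. - \<beta> / 8 - \<delta> / (2 * \<beta>) + \<beta> / 2 * (x + c1)\<^sup>2) (of_int n :: complex))\<^sup>2 - \<beta>\<^sup>2)"
      unfolding D2 den he by (rule q4div)
  qed
  show ?thesis using P1 P2 P3 P4 P5 P6 P7 by blast
qed

end
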